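(* Let $\lambda>0$, $M_y,M_z\ge1$, $d_y,d_z>0$, $k_z(m)=(m\bmod M_z)d_z$, $k_y(m)=\lfloor m/M_z\rfloor d_y$ for $m=0,\dots,M_yM_z-1$, and $\tilde\phi_m(\varphi,\theta,r)=k_z(m)\sin\theta+k_y(m)\sin\varphi\cos\theta-\frac{k_y(m)^2+k_z(m)^2}{2r}$. Suppose $K$ users are located at $(\varphi_o,\theta_k,r_k)$, $k=1,\dots,K$, all with the same azimuth $\varphi_o\in[-\pi/2,\pi/2]$, elevations $\theta_k\in[-\pi/2,\pi/2]$ and $r_k>0$. Let $p,q,v\in\{1,\dots,K\}$ satisfy $|\sin\theta_p-\sin\theta_q+\sin\theta_v|<1$; set $\theta_{pqv}=\arcsin(\sin\theta_p-\sin\theta_q+\sin\theta_v)$, and suppose moreover $\left|\frac{\sin\varphi_o}{\cos\theta_{pqv}}(\cos\theta_p-\cos\theta_q+\cos\theta_v)\right|\le1$ and $\frac1{r_p}-\frac1{r_q}+\frac1{r_v}>0$. Define the third-order focal point by $\varphi_{pqv}=\arcsin\left(\frac{\sin\varphi_o\cos\theta_p-\sin\varphi_o\cos\theta_q+\sin\varphi_o\cos\theta_v}{\cos\theta_{pqv}}\right)$ and $r_{pqv}=\left(\frac1{r_p}-\frac1{r_q}+\frac1{r_v}\right)^{-1}$. Then $$\theta_{pqv}=\arcsin(\sin\theta_p-\sin\theta_q+\sin\theta_v),\quad \varphi_{pqv}=\arcsin\left(\frac{\sin\varphi_o}{\cos\theta_{pqv}}(\cos\theta_p-\cos\theta_q+\cos\theta_v)\right),\quad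 r_{pqv}=\left(\frac1{r_p}-\frac1{r_q}+\frac1{r_v}\right)^{-1},$$ and $\tilde\phi_m(\varphi_o,\theta_p,r_p)-\tilde\phi_m(\varphi_o,\theta_q,r_q)+\tilde\phi_m(\varphi_o,\theta_v,r_v)=\tilde\phi_m(\varphi_{pqv},\theta_{pqv},r_{pqv})$ for all $m$; i.e., the third-order distortion is focused at these points.
   Context: Uniform planar array in the $yz$-plane transmitting $x_m[n]=\sum_k e^{-j\frac{2\pi}{\lambda}\tilde\phi_m(\varphi_k,\theta_k,r_k)}s_k[n]$ (Fresnel near-field model); the third-order distortion is the term $x_m|x_m|^2=\sum_{p,q,v}s_ps_q^*s_v\,e^{-j\frac{2\pi}{\lambda}(\tilde\phi_m(p)-\tilde\phi_m(q)+\tilde\phi_m(v))}$, and its focal points are the points whose Fresnel phase equals the alternating phase sum. The paper states the formulas as approximations of the true near-field focal points; within the Fresnel model they are exact. *)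

theory Defs
  imports Complex_Main
begin

definition kz :: "nat \<Rightarrow> real \<Rightarrow> nat \<Rightarrow> real" where
  "kz Mz dz m = real (m mod Mz) * dz"

definition ky :: "nat \<Rightarrow> real \<Rightarrow> nat \<Rightarrow> real" where
  "ky Mz dy m = real (m div Mz) * dy"

definition fresnel_phase :: "nat \<Rightarrow> real \<Rightarrow> real \<Rightarrow> nat \<Rightarrow> real \<Rightarrow> real \<Rightarrow> real \<Rightarrow> real" where
  "fresnel_phase Mz dy dz m az el r =
     kz Mz dz m * sin el + ky Mz dy m * sin az * cos el
     - ((ky Mz dy m)\<^sup>2 + (kz Mz dz m)\<^sup>2) / (2 * r)"

end

theory Submission
  imports Defs
begin

theorem corollary4:
  fixes lam dy dz phio :: real
    and My Mz K p q v :: nat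
    and theta r :: "nat \<Rightarrow> real"
    and theta_pqv phi_pqv r_pqv :: real
  assumes "lam > 0" and "My \<ge> 1" and "Mz \<ge> 1" and "dy > 0" and "dz > 0"
    and "phio \<in> {-pi/2..pi/2}"
    and "\<And>k. k \<in> {1..K} \<Longrightarrow> theta k \<in> {-pi/2..pi/2}"
    and "\<And>k. k \<in> {1..K} \<Longrightarrow> r k > 0"
    and "p \<in> {1..K}" and "q \<in> {1..K}" and "v \<in> {1..K}"
    and "\<bar>sin (theta p) - sin (theta q) + sin (theta v)\<bar> < 1"
    and "theta_pqv = arcsin (sin (theta p) - sin (theta q) + sin (theta v))"
    and "\<bar>sin phio / cos theta_pqv * (cos (theta p) - cos (theta q) + cos (theta v))\<bar> \<le> 1"
    and "1 / r p - 1 / r q + 1 / r v > 0"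
    and "phi_pqv = arcsin ((sin phio * cos (theta p) - sin phio * cos (theta q)
                            + sin phio * cos (theta v)) / cos theta_pqv)"
    and "r_pqv = inverse (1 / r p - 1 / r q + 1 / r v)"
  shows "theta_pqv = arcsin (sin (theta p) - sin (theta q) + sin (theta v))
       \<and> phi_pqv = arcsin (sin phio / cos theta_pqv * (cos (theta p) - cos (theta q) + cos (theta v)))
       \<and> r_pqv = inverse (1 / r p - 1 / r q + 1 / r v)
       \<and> (\<forall>m < My * Mz.
            fresnel_phase Mz dy dz m phio (theta p) (r p)
          - fresnel_phase Mz dy dz m phio (theta q) (r q)
          + fresnel_phase Mz dy dz m phio (theta v) (r v)
          = fresnel_phase Mz dy dz m phi_pqv theta_pqv r_pqv)"
proof -
  let ?S = "sin (theta p) - sin (theta q) + sin (theta v)"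
  let ?C = "cos (theta p) - cos (theta q) + cos (theta v)"
  have st: "sin theta_pqv = ?S" using assms(12,13) by (simp add: sin_arcsin)
  have sq: "?S\<^sup>2 < 1" using assms(12) by (simp add: abs_square_less_1)
  have ct: "cos theta_pqv > 0" using assms(12,13) sq
    by (simp add: cos_arcsin abs_less_iff)
  have A: "(sin phio * cos (theta p) - sin phio * cos (theta q) + sin phio * cos (theta v)) / cos theta_pqv
        = sin phio / cos theta_pqv * ?C" by (simp add: algebra_simps add_divide_distrib diff_divide_distrib)
  have sp: "sin phi_pqv = sin phio / cos theta_pqv * ?C"
  proof -
    have "phi_pqv = arcsin (sin phio / cos theta_pqv * ?C)" using assms(16) A by simp
    moreover have "-1 \<le> sin phio / cos theta_pqv * ?C" "sin phio / cos theta_pqv * ?C \<le> 1"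
      using abs_le_D1[OF assms(14)] abs_le_D2[OF assms(14)] by linarith+
    ultimately show ?thesis by (simp only: sin_arcsin)
  qed
  have spc: "sin phi_pqv * cos theta_pqv = sin phio * ?C" using sp ct by simp
  have ir: "1 / r_pqv = 1 / r p - 1 / r q + 1 / r v" using assms(17) by (simp add: inverse_eq_divide)
  show ?thesis
  proof (intro conjI allI impI)
    show "phi_pqv = arcsin (sin phio / cos theta_pqv * ?C)" using assms(16) A by simp
  next
    fix m
    show "fresnel_phase Mz dy dz m phio (theta p) (r p)
          - fresnel_phase Mz dy dz m phio (theta q) (r q)
          + fresnel_phase Mz dy dz m phio (theta v) (r v)
          = fresnel_phase Mz dy dz m phi_pqv theta_pqv r_pqv"
    proof -
      define a where "a = kz Mz dz m"
      define b where "b = ky Mz dy m"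
      define Q where "Q = b\<^sup>2 + a\<^sup>2"
      have L: "fresnel_phase Mz dy dz m phio (theta p) (r p)
          - fresnel_phase Mz dy dz m phio (theta q) (r q)
          + fresnel_phase Mz dy dz m phio (theta v) (r v)
          = a * ?S + b * (sin phio * ?C) - Q * (1 / r p - 1 / r q + 1 / r v) / 2"
        unfolding fresnel_phase_def a_def[symmetric] b_def[symmetric] Q_def[symmetric]
        by (simp add: field_simps)
      have R: "fresnel_phase Mz dy dz m phi_pqv theta_pqv r_pqv
          = a * sin theta_pqv + b * (sin phi_pqv * cos theta_pqv) - Q * (1 / r_pqv) / 2"
        unfolding fresnel_phase_def a_def[symmetric] b_def[symmetric] Q_def[symmetric]
        by (simp add: field_simps)
      show ?thesis unfolding L R st spc ir ..
    qed
  qed (use assms in auto)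
qed

end
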